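(* Let $M$ be a smooth manifold and $\alpha\in\Lambda$. Then $1+d\alpha$ is real if and only if $\alpha$ is the sum of a closed form and a real form. Also, $1+d\alpha$ is of modulus one (i.e. $(1+d\alpha)\wedge\overline{(1+d\alpha)}=1$) if and only if $\alpha$ is the sum of a closed form and a special imaginary form.
   Context: $\Lambda=\Omega^{\rm odd}(M,\mathbb C)/d\Omega^{\rm even}(M,\mathbb C)$; for odd forms $\alpha\stackrel\cap+\beta=\alpha+\beta+\alpha\wedge d\beta$ (a group law on $\Lambda$). $\gamma\in\Lambda$ is special imaginary if $\gamma\stackrel\cap+\overline\gamma=0$. *)

theory Defs
  imports Complex_Main
begin

text \<open>
  Abstract model of the complex de Rham algebra (Omega(M,C), wedge, d, conjugation) of a
  smooth manifold M.  Forms are elements of a type 'f with ring operations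
  (+ is addition of forms, * is the wedge product, 1 is the constant function 1),
  sc is multiplication by complex scalars, Ev / Od are the subspaces of even / odd
  (inhomogeneous) forms, d is the exterior derivative and cj is complex conjugation.
\<close>

definition forms_algebra ::
  "'f::ring_1 set \<Rightarrow> 'f set \<Rightarrow> (complex \<Rightarrow> 'f \<Rightarrow> 'f) \<Rightarrow> ('f \<Rightarrow> 'f) \<Rightarrow> ('f \<Rightarrow> 'f) \<Rightarrow> bool"
  where
  "forms_algebra Ev Od sc d cj \<longleftrightarrow>
     \<comment> \<open>complex algebra structure\<close>
     (\<forall>a x y. sc a (x + y) = sc a x + sc a y) \<and>
     (\<forall>a b x. sc (a + b) x = sc a x + sc b x) \<and>
     (\<forall>a b x. sc a (sc b x) = sc (a * b) x) \<and>
     (\<forall>x. sc 1 x = x) \<and>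
     (\<forall>a x y. sc a (x * y) = sc a x * y \<and> sc a (x * y) = x * sc a y) \<and>
     \<comment> \<open>Z/2-grading into even and odd forms\<close>
     0 \<in> Ev \<and> 0 \<in> Od \<and> 1 \<in> Ev \<and>
     (\<forall>x\<in>Ev. \<forall>y\<in>Ev. x + y \<in> Ev) \<and> (\<forall>x\<in>Od. \<forall>y\<in>Od. x + y \<in> Od) \<and>
     (\<forall>a. \<forall>x\<in>Ev. sc a x \<in> Ev) \<and> (\<forall>a. \<forall>x\<in>Od. sc a x \<in> Od) \<and>
     (\<forall>x. \<exists>e\<in>Ev. \<exists>u\<in>Od. x = e + u) \<and> Ev \<inter> Od = {0} \<and>
     (\<forall>x\<in>Ev. \<forall>y\<in>Ev. x * y \<in> Ev) \<and> (\<forall>x\<in>Ev. \<forall>y\<in>Od. x * y \<in> Od) \<and>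
     (\<forall>x\<in>Od. \<forall>y\<in>Ev. x * y \<in> Od) \<and> (\<forall>x\<in>Od. \<forall>y\<in>Od. x * y \<in> Ev) \<and>
     \<comment> \<open>graded commutativity of the wedge product\<close>
     (\<forall>x\<in>Ev. \<forall>y. x * y = y * x) \<and>
     (\<forall>x\<in>Od. \<forall>y\<in>Od. x * y = - (y * x)) \<and>
     \<comment> \<open>exterior derivative\<close>
     (\<forall>x y. d (x + y) = d x + d y) \<and> (\<forall>a x. d (sc a x) = sc a (d x)) \<and>
     (\<forall>x\<in>Ev. d x \<in> Od) \<and> (\<forall>x\<in>Od. d x \<in> Ev) \<and>
     (\<forall>x. d (d x) = 0) \<and>
     (\<forall>x\<in>Ev. \<forall>y. d (x * y) = d x * y + x * d y) \<and>
     (\<forall>x\<in>Od. \<forall>y. d (x * y) = d x * y - x * d y) \<and>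
     \<comment> \<open>complex conjugation\<close>
     (\<forall>x y. cj (x + y) = cj x + cj y) \<and> (\<forall>a x. cj (sc a x) = sc (cnj a) (cj x)) \<and>
     (\<forall>x. cj (cj x) = x) \<and> (\<forall>x y. cj (x * y) = cj x * cj y) \<and> cj 1 = 1 \<and>
     (\<forall>x\<in>Ev. cj x \<in> Ev) \<and> (\<forall>x\<in>Od. cj x \<in> Od) \<and>
     (\<forall>x. d (cj x) = cj (d x))"

text \<open>Equality in Lambda = Omega^odd / d Omega^even of (representatives) a, b.\<close>
definition lam_eq :: "'f::ring_1 set \<Rightarrow> ('f \<Rightarrow> 'f) \<Rightarrow> 'f \<Rightarrow> 'f \<Rightarrow> bool" where
  "lam_eq Ev d a b \<longleftrightarrow> (\<exists>e\<in>Ev. a = b + d e)"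

definition cap_plus :: "('f::ring_1 \<Rightarrow> 'f) \<Rightarrow> 'f \<Rightarrow> 'f \<Rightarrow> 'f" where
  "cap_plus d a b = a + b + a * d b"

definition special_imaginary ::
  "'f::ring_1 set \<Rightarrow> 'f set \<Rightarrow> ('f \<Rightarrow> 'f) \<Rightarrow> ('f \<Rightarrow> 'f) \<Rightarrow> 'f \<Rightarrow> bool" where
  "special_imaginary Ev Od d cj g \<longleftrightarrow> g \<in> Od \<and> lam_eq Ev d (cap_plus d g (cj g)) 0"

end

theory Submission
  imports Defs
begin

lemma add_hom_minus:
  fixes f :: "'f::ring_1 \<Rightarrow> 'f"
  assumes "\<forall>x y. f (x + y) = f x + f y"
  shows "f 0 = 0" "\<And>x. f (- x) = - f x" "\<And>x y. f (x - y) = f x - f y"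
proof -
  have z: "f 0 = 0" using assms[rule_format, of 0 0] by simp
  have n: "f (- x) = - f x" for x
  proof -
    have "f x + f (- x) = 0" using assms[rule_format, of x "- x"] z by simp
    thus ?thesis by (simp add: eq_neg_iff_add_eq_0 add.commute)
  qed
  show "f 0 = 0" by (fact z)
  show "\<And>x. f (- x) = - f x" by (fact n)
  show "f (x - y) = f x - f y" for x y
    using assms[rule_format, of x "- y"] n[of y] by simp
qed

theorem mainTheorem10:
  fixes Ev Od :: "'f::ring_1 set" and sc :: "complex \<Rightarrow> 'f \<Rightarrow> 'f"
    and d cj :: "'f \<Rightarrow> 'f" and \<alpha> :: 'f
  assumes "forms_algebra Ev Od sc d cj"
    and "\<alpha> \<in> Od"
  shows "(cj (1 + d \<alpha>) = 1 + d \<alpha> \<longleftrightarrow>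
            (\<exists>c r. c \<in> Od \<and> d c = 0 \<and> r \<in> Od \<and> cj r = r \<and> lam_eq Ev d \<alpha> (c + r)))
       \<and> ((1 + d \<alpha>) * cj (1 + d \<alpha>) = 1 \<longleftrightarrow>
            (\<exists>c g. c \<in> Od \<and> d c = 0 \<and> special_imaginary Ev Od d cj g \<and> lam_eq Ev d \<alpha> (c + g)))"
proof -
  note F = assms(1)[unfolded forms_algebra_def]
  have scadd0: "\<forall>a x y. sc a (x + y) = sc a x + sc a y" using F by (elim conjE) assumption
  have scadd: "\<And>a x y. sc a (x + y) = sc a x + sc a y" using scadd0 by blast
  have scadd20: "\<forall>a b x. sc (a + b) x = sc a x + sc b x" using F by (elim conjE) assumption
  have scadd2: "\<And>a b x. sc (a + b) x = sc a x + sc b x" using scadd20 by blast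
  have sc10: "\<forall>x. sc 1 x = x" using F by (elim conjE) assumption
  have sc1: "\<And>x. sc 1 x = x" using sc10 by blast
  have scOd0: "\<forall>a. \<forall>x\<in>Od. sc a x \<in> Od" using F by (elim conjE) assumption
  have scOd: "\<And>a x. x \<in> Od \<Longrightarrow> sc a x \<in> Od" using scOd0 by blast
  have scEv0: "\<forall>a. \<forall>x\<in>Ev. sc a x \<in> Ev" using F by (elim conjE) assumption
  have scEv: "\<And>a x. x \<in> Ev \<Longrightarrow> sc a x \<in> Ev" using scEv0 by blast
  have Ev0: "0 \<in> Ev" using F by (elim conjE) assumption
  have OdAdd0: "\<forall>x\<in>Od. \<forall>y\<in>Od. x + y \<in> Od" using F by (elim conjE) assumption
  have OdAdd: "\<And>x y. x \<in> Od \<Longrightarrow> y \<in> Od \<Longrightarrow> x + y \<in> Od" using OdAdd0 by blast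
  have EvAdd0: "\<forall>x\<in>Ev. \<forall>y\<in>Ev. x + y \<in> Ev" using F by (elim conjE) assumption
  have EvAdd: "\<And>x y. x \<in> Ev \<Longrightarrow> y \<in> Ev \<Longrightarrow> x + y \<in> Ev" using EvAdd0 by blast
  have OdOd0: "\<forall>x\<in>Od. \<forall>y\<in>Od. x * y \<in> Ev" using F by (elim conjE) assumption
  have OdOd: "\<And>x y. x \<in> Od \<Longrightarrow> y \<in> Od \<Longrightarrow> x * y \<in> Ev" using OdOd0 by blast
  have EvComm0: "\<forall>x\<in>Ev. \<forall>y. x * y = y * x" using F by (elim conjE) assumption
  have EvComm: "\<And>x y. x \<in> Ev \<Longrightarrow> x * y = y * x" using EvComm0 by blast
  have dadd: "\<forall>x y. d (x + y) = d x + d y" using F by (elim conjE) assumption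
  have dsc0: "\<forall>a x. d (sc a x) = sc a (d x)" using F by (elim conjE) assumption
  have dsc: "\<And>a x. d (sc a x) = sc a (d x)" using dsc0 by blast
  have dOd0: "\<forall>x\<in>Od. d x \<in> Ev" using F by (elim conjE) assumption
  have dOd: "\<And>x. x \<in> Od \<Longrightarrow> d x \<in> Ev" using dOd0 by blast
  have dd0: "\<forall>x. d (d x) = 0" using F by (elim conjE) assumption
  have dd: "\<And>x. d (d x) = 0" using dd0 by blast
  have dOdmul0: "\<forall>x\<in>Od. \<forall>y. d (x * y) = d x * y - x * d y" using F by (elim conjE) assumption
  have dOdmul: "\<And>x y. x \<in> Od \<Longrightarrow> d (x * y) = d x * y - x * d y" using dOdmul0 by blast
  have cjadd: "\<forall>x y. cj (x + y) = cj x + cj y" using F by (elim conjE) assumption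
  have cjsc0: "\<forall>a x. cj (sc a x) = sc (cnj a) (cj x)" using F by (elim conjE) assumption
  have cjsc: "\<And>a x. cj (sc a x) = sc (cnj a) (cj x)" using cjsc0 by blast
  have cjcj0: "\<forall>x. cj (cj x) = x" using F by (elim conjE) assumption
  have cjcj: "\<And>x. cj (cj x) = x" using cjcj0 by blast
  have cj1: "cj 1 = 1" using F by (elim conjE) assumption
  have cjOd0: "\<forall>x\<in>Od. cj x \<in> Od" using F by (elim conjE) assumption
  have cjOd: "\<And>x. x \<in> Od \<Longrightarrow> cj x \<in> Od" using cjOd0 by blast
  have dcj0: "\<forall>x. d (cj x) = cj (d x)" using F by (elim conjE) assumption
  have dcj: "\<And>x. d (cj x) = cj (d x)" using dcj0 by blast
  have OdEv0: "\<forall>x\<in>Od. \<forall>y\<in>Ev. x * y \<in> Od" using F by (elim conjE) assumption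
  have OdEv: "\<And>x y. x \<in> Od \<Longrightarrow> y \<in> Ev \<Longrightarrow> x * y \<in> Od" using OdEv0 by blast
  have cjmul0: "\<forall>x y. cj (x * y) = cj x * cj y" using F by (elim conjE) assumption
  have cjmul: "\<And>x y. cj (x * y) = cj x * cj y" using cjmul0 by blast
  note dm = add_hom_minus[OF dadd] and cjm = add_hom_minus[OF cjadd]
  have cjaddI: "\<And>x y. cj (x + y) = cj x + cj y" using cjadd by blast
  have daddI: "\<And>x y. d (x + y) = d x + d y" using dadd by blast
  have scm: "\<And>a x y. sc a (x - y) = sc a x - sc a y"
  proof -
    fix a x y
    have "sc a (x - y) + sc a y = sc a x" using scadd[of a "x - y" y] by simp
    thus "sc a (x - y) = sc a x - sc a y" by (simp add: eq_diff_eq)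
  qed
  have half: "\<And>x. sc (1/2) x + sc (1/2) x = x"
    using scadd2[of "1/2" "1/2"] sc1 by simp
  have sc0: "\<And>x. sc 0 x = 0"
  proof -
    fix x
    have "sc 0 x = sc 0 x + sc 0 x" using scadd2[of 0 0 x] by simp
    thus "sc 0 x = 0" by simp
  qed
  have scneg: "\<And>x. sc (-1) x = - x"
  proof -
    fix x
    have "sc (-1) x + x = 0" using scadd2[of "-1" 1 x] sc1 sc0 by simp
    thus "sc (-1) x = - x" by (simp add: eq_neg_iff_add_eq_0)
  qed
  have OdNeg: "\<And>x. x \<in> Od \<Longrightarrow> - x \<in> Od" using scOd scneg by metis
  have OdDiff: "\<And>x y. x \<in> Od \<Longrightarrow> y \<in> Od \<Longrightarrow> x - y \<in> Od"
    using OdNeg OdAdd by (metis diff_conv_add_uminus)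
  define a where "a = \<alpha>"
  define b where "b = cj \<alpha>"
  have aOd: "a \<in> Od" and bOd: "b \<in> Od" using assms(2) cjOd by (auto simp: a_def b_def)
  have db: "d b = cj (d a)" by (simp add: a_def b_def dcj)
  have P1: "(cj (1 + d \<alpha>) = 1 + d \<alpha> \<longleftrightarrow>
            (\<exists>c r. c \<in> Od \<and> d c = 0 \<and> r \<in> Od \<and> cj r = r \<and> lam_eq Ev d \<alpha> (c + r)))"
  proof
    assume h: "cj (1 + d \<alpha>) = 1 + d \<alpha>"
    hence h2: "d b = d a" using cjaddI cj1 db a_def by simp
    define c where "c = sc (1/2) (a - b)"
    define r where "r = sc (1/2) (a + b)"
    have "c \<in> Od" unfolding c_def using scOd OdDiff aOd bOd by blast
    moreover have "d c = 0" unfolding c_def using dsc dm h2 scm by simp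
    moreover have "r \<in> Od" unfolding r_def using scOd OdAdd aOd bOd by blast
    moreover have "cj r = r" unfolding r_def using cjsc cjaddI cjcj a_def b_def
      by (simp add: add.commute)
    moreover have "lam_eq Ev d \<alpha> (c + r)" unfolding lam_eq_def
    proof (rule bexI[OF _ Ev0])
      have "c + r = sc (1/2) a + sc (1/2) a" unfolding c_def r_def
        by (simp add: scm scadd)
      thus "\<alpha> = c + r + d 0" using half dm(1) a_def by simp
    qed
    ultimately show "\<exists>c r. c \<in> Od \<and> d c = 0 \<and> r \<in> Od \<and> cj r = r \<and> lam_eq Ev d \<alpha> (c + r)"
      by blast
  next
    assume "\<exists>c r. c \<in> Od \<and> d c = 0 \<and> r \<in> Od \<and> cj r = r \<and> lam_eq Ev d \<alpha> (c + r)"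
    then obtain c r e where "d c = 0" "cj r = r" "\<alpha> = c + r + d e"
      unfolding lam_eq_def by blast
    hence "d \<alpha> = d r" using daddI dd by simp
    thus "cj (1 + d \<alpha>) = 1 + d \<alpha>" using cjaddI[of 1 "d r"] cj1 dcj[of r] \<open>cj r = r\<close> by simp
  qed
  have expand: "(1 + d \<alpha>) * cj (1 + d \<alpha>) = 1 + (d a + d b + d a * d b)"
    using cjaddI cj1 db a_def by (simp add: algebra_simps)
  have P2: "((1 + d \<alpha>) * cj (1 + d \<alpha>) = 1 \<longleftrightarrow>
            (\<exists>c g. c \<in> Od \<and> d c = 0 \<and> special_imaginary Ev Od d cj g \<and> lam_eq Ev d \<alpha> (c + g)))"
  proof
    assume h: "(1 + d \<alpha>) * cj (1 + d \<alpha>) = 1"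
    hence h0: "d a + d b + d a * d b = 0" using expand by simp
    define \<beta> where "\<beta> = a + b + a * d b"
    have dOdEv: "d b \<in> Ev" using dOd bOd by blast
    have "a * d b \<in> Od" using OdEv aOd dOdEv by blast
    hence \<beta>Od: "\<beta> \<in> Od" unfolding \<beta>_def using OdAdd aOd bOd by blast
    have d\<beta>: "d \<beta> = 0" unfolding \<beta>_def using daddI dOdmul[OF aOd] dd h0 by simp
    have cj\<beta>: "cj \<beta> = \<beta> - d (b * a)"
    proof -
      have "cj \<beta> = b + a + b * d a" unfolding \<beta>_def b_def a_def
        using cjaddI cjcj cjmul dcj by (simp add: a_def)
      moreover have "d (b * a) = d b * a - b * d a" using dOdmul[OF bOd] .
      moreover have "d b * a = a * d b" using EvComm[OF dOdEv] .
      ultimately show ?thesis unfolding \<beta>_def by (simp add: algebra_simps)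
    qed
    define c where "c = sc (1/2) \<beta>"
    define g where "g = a - c"
    have cOd: "c \<in> Od" unfolding c_def using scOd \<beta>Od by blast
    have dc: "d c = 0" unfolding c_def using dsc d\<beta> dm by (metis scm diff_self)
    have cjc: "cj c = c - d (sc (1/2) (b * a))" unfolding c_def
      using cjsc cj\<beta> scm dsc by simp
    have gOd: "g \<in> Od" unfolding g_def using cOd aOd OdDiff by blast
    have cjg: "cj g = b - cj c" unfolding g_def b_def a_def using cjm by simp
    have dcjc: "d (cj c) = 0" using dcj dc cjm by simp
    have dcjg: "d (cj g) = d b" using cjg dm dcjc by simp
    have cdb: "c * d b = - d (c * b)" using dOdmul[OF cOd] dc dd by simp
    have "cap_plus d g (cj g) = d (sc (1/2) (b * a) + c * b)"
    proof -
      have "cap_plus d g (cj g) = g + cj g + g * d b" by (simp add: cap_plus_def dcjg)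
      also have "\<dots> = \<beta> - c - cj c - c * d b"
        unfolding cjg unfolding g_def \<beta>_def by (simp add: algebra_simps)
      also have "\<dots> = \<beta> - (c + c) + d (sc (1/2) (b * a)) + d (c * b)"
        using cjc cdb by simp
      also have "\<dots> = d (sc (1/2) (b * a)) + d (c * b)" using half c_def by simp
      finally show ?thesis using daddI by simp
    qed
    moreover have "sc (1/2) (b * a) + c * b \<in> Ev"
      using EvAdd scEv OdOd bOd aOd cOd by blast
    ultimately have "special_imaginary Ev Od d cj g"
      unfolding special_imaginary_def lam_eq_def using gOd by auto
    moreover have "lam_eq Ev d \<alpha> (c + g)" unfolding lam_eq_def
      using Ev0 dm(1) g_def a_def by auto
    ultimately show "\<exists>c g. c \<in> Od \<and> d c = 0 \<and> special_imaginary Ev Od d cj g \<and> lam_eq Ev d \<alpha> (c + g)"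
      using cOd dc by blast
  next
    assume "\<exists>c g. c \<in> Od \<and> d c = 0 \<and> special_imaginary Ev Od d cj g \<and> lam_eq Ev d \<alpha> (c + g)"
    then obtain c g e e' where dc: "d c = 0" and gOd: "g \<in> Od"
      and si: "g + cj g + g * d (cj g) = d e'" and al: "\<alpha> = c + g + d e"
      unfolding special_imaginary_def lam_eq_def cap_plus_def by auto
    have "d (g + cj g + g * d (cj g)) = 0" using si dd by simp
    hence k: "d g + d (cj g) + d g * d (cj g) = 0" using daddI dOdmul[OF gOd] dd by simp
    have "d a = d g" using al a_def daddI dc dd by simp
    moreover have "d b = d (cj g)" using \<open>d a = d g\<close> db dcj by simp
    ultimately show "(1 + d \<alpha>) * cj (1 + d \<alpha>) = 1" using expand k by simp
  qed
  show ?thesis using P1 P2 by blast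
qed

end
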